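(* Let $m\ge2$, $G=CK(2m-1)$, and let $B$ be a blocker for the simple Hamiltonian paths of $G$ whose $m$ edges are parallel (or equal) to the boundary edges $[0,1],\dots,[m-1,m]$, one per direction. Let $[\alpha,\alpha+1]$ and $[m-\delta-1,m-\delta]$ be the first and last edges of $\langle0,1,\dots,m\rangle$ belonging to $B$. Let $e\in B$ be parallel to one of the $\alpha+\delta$ boundary edges $[0,1],\dots,[\alpha-1,\alpha],[m-\delta,m-\delta+1],\dots,[m-1,m]$. Put $A=\langle\alpha,\alpha+1,\dots,m-\delta\rangle$ and $\bar A=\langle m-\delta,\dots,2m-2,0,1,\dots,\alpha\rangle$. Then $e$ connects an internal vertex of $A$ to an internal vertex of $\bar A$.
   Context: $CK(2m-1)$ is the complete convex geometric graph on $2m-1$ points in convex position, labelled clockwise $0,\dots,2m-2$ (elements of $\mathbb{Z}_{2m-1}$), with all segments as edges; boundary edges are $[i,i+1]$. The direction of $[i,j]$ is $i+j\pmod{2m-1}$; edges are parallel if they have the same direction. A simple Hamiltonian path (SHP) is a path through all vertices whose edges pairwise do not cross; a blocker for SHPs is an edge set of smallest possible size sharing an edge with every SHP. *)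

theory Defs
  imports Main
begin

text \<open>The complete convex geometric graph CK(n): vertices 0..n-1 in convex position,
  labelled clockwise; edges are all 2-element subsets of the vertex set.\<close>
definition ck_edges :: "nat \<Rightarrow> nat set set" where
  "ck_edges n = {{i, j} | i j. i < n \<and> j < n \<and> i \<noteq> j}"

definition edge_dir :: "nat \<Rightarrow> nat set \<Rightarrow> nat" where
  "edge_dir n e = (\<Sum>x\<in>e. x) mod n"

text \<open>Two segments between points in convex position cross iff their endpoints
  are four distinct points that interleave in the cyclic (equivalently linear) order.\<close>
definition crosses :: "nat set \<Rightarrow> nat set \<Rightarrow> bool" where
  "crosses e f = (\<exists>a b c d. ((e = {a, b} \<and> f = {c, d}) \<or> (e = {c, d} \<and> f = {a, b}))
                              \<and> a < c \<and> c < b \<and> b < d)"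

definition path_edges :: "nat list \<Rightarrow> nat set set" where
  "path_edges p = {{p ! k, p ! Suc k} | k. Suc k < length p}"

definition is_SHP :: "nat \<Rightarrow> nat list \<Rightarrow> bool" where
  "is_SHP n p = (distinct p \<and> set p = {..<n} \<and>
      (\<forall>e\<in>path_edges p. \<forall>f\<in>path_edges p. \<not> crosses e f))"

definition hits_all_SHP :: "nat \<Rightarrow> nat set set \<Rightarrow> bool" where
  "hits_all_SHP n B = (\<forall>p. is_SHP n p \<longrightarrow> B \<inter> path_edges p \<noteq> {})"

definition is_SHP_blocker :: "nat \<Rightarrow> nat set set \<Rightarrow> bool" where
  "is_SHP_blocker n B = (B \<subseteq> ck_edges n \<and> hits_all_SHP n B \<and>
      (\<forall>B'. B' \<subseteq> ck_edges n \<and> hits_all_SHP n B' \<longrightarrow> card B \<le> card B'))"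

end

theory Submission
  imports Defs
begin

fun grows :: "nat \<Rightarrow> nat \<Rightarrow> nat list \<Rightarrow> bool" where
  "grows lo hi [] = True"
| "grows lo hi (x # xs) = ((x = Suc hi \<and> grows lo x xs) \<or> (Suc x = lo \<and> grows x hi xs))"

lemma path_edges_Nil[simp]: "path_edges [] = {}"
  by (simp add: path_edges_def)
lemma path_edges_single[simp]: "path_edges [a] = {}"
  by (simp add: path_edges_def)
lemma path_edges_Cons2[simp]: "path_edges (a # b # xs) = insert {a,b} (path_edges (b # xs))"
proof (rule set_eqI, rule iffI)
  fix E assume "E \<in> path_edges (a # b # xs)"
  then obtain k where k: "E = {(a#b#xs) ! k, (a#b#xs) ! Suc k}" "Suc k < length (a#b#xs)"
    unfolding path_edges_def by blast
  show "E \<in> insert {a,b} (path_edges (b # xs))"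
  proof (cases k)
    case 0 then show ?thesis using k by simp
  next
    case (Suc k') then show ?thesis using k unfolding path_edges_def by force
  qed
next
  fix E assume "E \<in> insert {a,b} (path_edges (b # xs))"
  then show "E \<in> path_edges (a # b # xs)"
  proof
    assume "E = {a,b}" then show ?thesis unfolding path_edges_def
      by (rule_tac CollectI, rule_tac x=0 in exI) simp
  next
    assume "E \<in> path_edges (b # xs)"
    then obtain k where k: "E = {(b#xs) ! k, (b#xs) ! Suc k}" "Suc k < length (b#xs)"
      unfolding path_edges_def by blast
    then show ?thesis unfolding path_edges_def
      by (rule_tac CollectI, rule_tac x="Suc k" in exI) simp
  qed
qed

lemma crosses_sym: "crosses e f = crosses f e" unfolding crosses_def by blast

definition sep :: "nat \<Rightarrow> nat \<Rightarrow> nat set \<Rightarrow> bool" where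
  "sep x y T = ((\<forall>z\<in>T. \<not>(min x y < z \<and> z < max x y)) \<or> (\<forall>z\<in>T. min x y \<le> z \<and> z \<le> max x y))"

lemma nc_lt:
  assumes "x < y" "c \<in> T" "d \<in> T"
    "(\<forall>z\<in>T. \<not>(x<z \<and> z<y)) \<or> (\<forall>z\<in>T. x \<le> z \<and> z \<le> y)"
  shows "\<not> crosses {x,y} {c,d}"
proof
  assume "crosses {x,y} {c,d}"
  then obtain a b c' d' where h: "({x,y} = {a,b} \<and> {c,d} = {c',d'}) \<or> ({x,y} = {c',d'} \<and> {c,d} = {a,b})"
    "a < c'" "c' < b" "b < d'" unfolding crosses_def by blast
  from h(1) show False
  proof
    assume h1: "{x,y} = {a,b} \<and> {c,d} = {c',d'}"
    then have "a = x" "b = y" using h(2-4) assms(1) by (auto simp: doubleton_eq_iff)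
    moreover have "c' \<in> T" "d' \<in> T" using h1 assms(2,3) by (auto simp: doubleton_eq_iff)
    ultimately show False using assms(4) h(2-4) by force
  next
    assume h1: "{x,y} = {c',d'} \<and> {c,d} = {a,b}"
    then have "c' = x" "d' = y" using h(2-4) assms(1) by (auto simp: doubleton_eq_iff)
    moreover have "a \<in> T" "b \<in> T" using h1 assms(2,3) by (auto simp: doubleton_eq_iff)
    ultimately show False using assms(4) h(2-4) by force
  qed
qed

lemma nc:
  assumes "x \<noteq> y" "sep x y T" "c \<in> T" "d \<in> T"
  shows "\<not> crosses {x,y} {c,d}" "\<not> crosses {c,d} {x,y}"
proof -
  show "\<not> crosses {x,y} {c,d}"
  proof (cases "x < y")
    case True then show ?thesis using nc_lt[of x y c T d] assms unfolding sep_def by auto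
  next
    case False then have "y < x" using assms(1) by simp
    then show ?thesis using nc_lt[of y x c T d] assms unfolding sep_def by (auto simp: insert_commute)
  qed
  then show "\<not> crosses {c,d} {x,y}" using crosses_sym by blast
qed

lemma mod_win:
  fixes n :: nat
  assumes "n > 0" "n * q \<le> v" "v < n * q + 2 * n"
  shows "v mod n = (if v < n * q + n then v - n * q else v - n * q - n)"
proof -
  obtain r where r: "v = n * q + r" using assms(2) le_iff_add by blast
  show ?thesis
  proof (cases "r < n")
    case True
    have "v mod n = r" unfolding r using True by simp
    then show ?thesis using True r by simp
  next
    case False
    have r2: "v = (r - n) + n * Suc q" using r False by simp
    have "r - n < n" using r assms(3) by simp
    then have "v mod n = r - n" unfolding r2 mod_mult_self2 by simp
    then show ?thesis using False r by simp
  qed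
qed

lemma mod_inj_win:
  fixes n :: nat
  assumes "n > 0" "a \<le> u" "a \<le> v" "u < a + n" "v < a + n" "u mod n = v mod n"
  shows "u = v"
proof -
  define q where "q = a div n"
  have q1: "n * q \<le> a" "a < n * q + n"
  proof -
    have "a = n * q + a mod n" unfolding q_def by simp
    moreover have "a mod n < n" using assms(1) by simp
    ultimately show "n * q \<le> a" "a < n * q + n" by linarith+
  qed
  have "u mod n = (if u < n * q + n then u - n * q else u - n * q - n)"
    by (rule mod_win) (use assms q1 in auto)
  moreover have "v mod n = (if v < n * q + n then v - n * q else v - n * q - n)"
    by (rule mod_win) (use assms q1 in auto)
  ultimately show ?thesis using assms q1 by (auto split: if_splits)
qed

lemma win_adj:
  fixes n :: nat
  assumes "n>0" "lo \<le> p" "p < q" "q \<le> hi" "hi < lo + n"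
    "q = Suc p \<or> (p = lo \<and> q = hi)"
  shows "sep (p mod n) (q mod n) ((\<lambda>v. v mod n) ` {lo..hi})"
proof -
  define r where "r = lo div n"
  have q1: "n * r \<le> lo" "lo < n * r + n"
  proof -
    have "lo = n * r + lo mod n" unfolding r_def by simp
    moreover have "lo mod n < n" using assms(1) by simp
    ultimately show "n * r \<le> lo" "lo < n * r + n" by linarith+
  qed
  have mw: "v mod n = (if v < n * r + n then v - n * r else v - n * r - n)" if "lo \<le> v" "v \<le> hi" for v
    by (rule mod_win) (use assms q1 that in auto)
  have pm: "p mod n = (if p < n * r + n then p - n * r else p - n * r - n)" using mw assms by auto
  have qm: "q mod n = (if q < n * r + n then q - n * r else q - n * r - n)" using mw assms by auto
  show ?thesis
    using assms(6)
  proof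
    assume qs: "q = Suc p"
    show ?thesis
    proof (cases "q = n * r + n")
      case True
      then have h: "p mod n = n - 1" "q mod n = 0" using pm qm qs assms(1) by auto
      have "\<forall>z\<in>(\<lambda>v. v mod n) ` {lo..hi}. min (p mod n) (q mod n) \<le> z \<and> z \<le> max (p mod n) (q mod n)"
      proof
        fix z assume "z \<in> (\<lambda>v. v mod n) ` {lo..hi}"
        then have "z < n" using assms(1) by auto
        then show "min (p mod n) (q mod n) \<le> z \<and> z \<le> max (p mod n) (q mod n)"
          unfolding h by simp
      qed
      then show ?thesis unfolding sep_def by blast
    next
      case False
      then have "q mod n = Suc (p mod n)" using pm qm qs q1 assms(2) by auto
      then show ?thesis unfolding sep_def by auto
    qed
  next
    assume pq: "p = lo \<and> q = hi"
    show ?thesis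
    proof (cases "hi < n * r + n")
      case True
      have "\<forall>z\<in>(\<lambda>v. v mod n) ` {lo..hi}. min (p mod n) (q mod n) \<le> z \<and> z \<le> max (p mod n) (q mod n)"
      proof
        fix z assume "z \<in> (\<lambda>v. v mod n) ` {lo..hi}"
        then obtain v where v: "z = v mod n" "lo \<le> v" "v \<le> hi" by auto
        have "z = v - n * r" using mw[OF v(2,3)] v(1) True v(3) by simp
        moreover have "p mod n = lo - n * r" "q mod n = hi - n * r" using pm qm pq True q1 by auto
        ultimately show "min (p mod n) (q mod n) \<le> z \<and> z \<le> max (p mod n) (q mod n)"
          using v q1 by (simp add: min_def max_def) arith
      qed
      then show ?thesis unfolding sep_def by blast
    next
      case False
      have pq2: "p mod n = lo - n * r" "q mod n = hi - n * r - n" using pm qm pq False q1 by auto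
      have "\<forall>z\<in>(\<lambda>v. v mod n) ` {lo..hi}. \<not>(min (p mod n) (q mod n) < z \<and> z < max (p mod n) (q mod n))"
      proof
        fix z assume "z \<in> (\<lambda>v. v mod n) ` {lo..hi}"
        then obtain v where v: "z = v mod n" "lo \<le> v" "v \<le> hi" by auto
        have "z = (if v < n * r + n then v - n * r else v - n * r - n)" using mw[OF v(2,3)] v(1) by simp
        then show "\<not>(min (p mod n) (q mod n) < z \<and> z < max (p mod n) (q mod n))"
          using v q1 pq2 assms(5) False by (simp add: min_def max_def split: if_splits; arith)
      qed
      then show ?thesis unfolding sep_def by blast
    qed
  qed
qed


lemma grows_struct:
  assumes "grows lo hi xs" "lo \<le> hi"
  shows "\<exists>lo' hi'. lo' \<le> lo \<and> hi \<le> hi' \<and> hi' + lo = hi + lo' + length xs \<and>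
     set xs \<union> {lo..hi} = {lo'..hi'} \<and> set xs \<inter> {lo..hi} = {} \<and> distinct xs"
  using assms
proof (induction xs arbitrary: lo hi)
  case Nil
  then show ?case by auto
next
  case (Cons x xs)
  from Cons.prems(1) have "(x = Suc hi \<and> grows lo x xs) \<or> (Suc x = lo \<and> grows x hi xs)" by simp
  then show ?case
  proof
    assume R: "x = Suc hi \<and> grows lo x xs"
    have "\<exists>lo' hi'. lo' \<le> lo \<and> x \<le> hi' \<and> hi' + lo = x + lo' + length xs \<and>
     set xs \<union> {lo..x} = {lo'..hi'} \<and> set xs \<inter> {lo..x} = {} \<and> distinct xs"
      using Cons.IH[of lo x] Cons.prems(2) R by (meson le_SucI)
    then obtain lo' hi' where h: "lo' \<le> lo" "x \<le> hi'" "hi' + lo = x + lo' + length xs"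
      "set xs \<union> {lo..x} = {lo'..hi'}" "set xs \<inter> {lo..x} = {}" "distinct xs"
      by blast
    have e: "{lo..x} = insert x {lo..hi}" using R Cons.prems(2) by auto
    have "set (x # xs) \<union> {lo..hi} = {lo'..hi'}" using h(4) unfolding e by auto
    moreover have "set (x # xs) \<inter> {lo..hi} = {}" using h(5) R unfolding e by auto
    moreover have "distinct (x # xs)" using h(5,6) unfolding e by auto
    ultimately show ?thesis using h(1-3) R by (intro exI[of _ lo'] exI[of _ hi']) simp
  next
    assume L: "Suc x = lo \<and> grows x hi xs"
    have "\<exists>lo' hi'. lo' \<le> x \<and> hi \<le> hi' \<and> hi' + x = hi + lo' + length xs \<and>
     set xs \<union> {x..hi} = {lo'..hi'} \<and> set xs \<inter> {x..hi} = {} \<and> distinct xs"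
      using Cons.IH[of x hi] Cons.prems(2) L by (meson Suc_leD)
    then obtain lo' hi' where h: "lo' \<le> x" "hi \<le> hi'" "hi' + x = hi + lo' + length xs"
      "set xs \<union> {x..hi} = {lo'..hi'}" "set xs \<inter> {x..hi} = {}" "distinct xs"
      by blast
    have e: "{x..hi} = insert x {lo..hi}" using L Cons.prems(2) by auto
    have "set (x # xs) \<union> {lo..hi} = {lo'..hi'}" using h(4) unfolding e by auto
    moreover have "set (x # xs) \<inter> {lo..hi} = {}" using h(5) L unfolding e by auto
    moreover have "distinct (x # xs)" using h(5,6) unfolding e by auto
    ultimately show ?thesis using h(1-3) L by (intro exI[of _ lo'] exI[of _ hi']) simp
  qed
qed

lemma grows_nc:
  fixes n :: nat
  assumes "n>0" "grows lo hi xs" "lo \<le> hi" "cur = lo \<or> cur = hi" "hi + length xs < lo + n"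
  shows "\<forall>E\<in>path_edges (map (\<lambda>v. v mod n) (cur # xs)).
     (\<forall>c\<in>(\<lambda>v. v mod n)`{lo..hi}. \<forall>d\<in>(\<lambda>v. v mod n)`{lo..hi}. \<not>crosses E {c,d} \<and> \<not>crosses {c,d} E)
     \<and> (\<forall>E'\<in>path_edges (map (\<lambda>v. v mod n) (cur # xs)). \<not>crosses E E')"
  using assms(2-5)
proof (induction xs arbitrary: lo hi cur)
  case Nil
  then show ?case by simp
next
  case (Cons x xs)
  let ?f = "\<lambda>v::nat. v mod n"
  let ?R = "path_edges (map ?f (x # xs))"
  have edges: "path_edges (map ?f (cur # x # xs)) = insert {?f cur, ?f x} ?R" by simp
  from Cons.prems(1) have "(x = Suc hi \<and> grows lo x xs) \<or> (Suc x = lo \<and> grows x hi xs)" by simp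
  then show ?case
  proof (elim disjE conjE)
    assume R: "x = Suc hi" "grows lo x xs"
    let ?T' = "?f ` {lo..x}"
    have IH: "\<forall>E\<in>?R. (\<forall>c\<in>?T'. \<forall>d\<in>?T'. \<not>crosses E {c,d} \<and> \<not>crosses {c,d} E) \<and> (\<forall>E'\<in>?R. \<not>crosses E E')"
    proof -
      have a: "grows lo x xs" "lo \<le> x" "x = lo \<or> x = x" "x + length xs < lo + n"
        using R Cons.prems by auto
      show ?thesis using Cons.IH[OF a] by simp
    qed
    have sub: "?f ` {lo..hi} \<subseteq> ?T'" using R(1) by auto
    have sp: "sep (?f cur) (?f x) ?T'"
      by (rule win_adj) (use assms(1) R(1) Cons.prems in auto)
    have neq: "?f cur \<noteq> ?f x"
    proof
      assume "?f cur = ?f x"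
      moreover have "lo \<le> cur" "lo \<le> x" "cur < lo + n" "x < lo + n" using R(1) Cons.prems by auto
      ultimately have "cur = x" using mod_inj_win[OF assms(1)] by blast
      then show False using R(1) Cons.prems by auto
    qed
    have inT: "?f cur \<in> ?T'" "?f x \<in> ?T'" using R(1) Cons.prems by auto
    show ?thesis unfolding edges
    proof (intro ballI conjI)
      fix E c d assume E: "E \<in> insert {?f cur, ?f x} ?R" and cd: "c \<in> ?f ` {lo..hi}" "d \<in> ?f ` {lo..hi}"
      then have cd': "c \<in> ?T'" "d \<in> ?T'" using sub by auto
      show "\<not> crosses E {c,d}" "\<not> crosses {c,d} E"
        using E nc[OF neq sp cd'] IH cd' by auto
    next
      fix E E' assume E: "E \<in> insert {?f cur, ?f x} ?R" and E': "E' \<in> insert {?f cur, ?f x} ?R"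
      show "\<not> crosses E E'"
      proof (cases "E = {?f cur, ?f x}")
        case True
        show ?thesis
        proof (cases "E' = {?f cur, ?f x}")
          case True
          then show ?thesis using nc[OF neq sp inT(1) inT(2)] `E = {?f cur, ?f x}` by simp
        next
          case False
          then have "E' \<in> ?R" using E' by simp
          then have "\<forall>c\<in>?T'. \<forall>d\<in>?T'. \<not>crosses E' {c,d} \<and> \<not>crosses {c,d} E'" using IH by blast
          then show ?thesis using inT True by blast
        qed
      next
        case False
        then have ER: "E \<in> ?R" using E by simp
        show ?thesis
        proof (cases "E' = {?f cur, ?f x}")
          case True
          have "\<forall>c\<in>?T'. \<forall>d\<in>?T'. \<not>crosses E {c,d} \<and> \<not>crosses {c,d} E" using IH ER by blast
          then show ?thesis using inT True by blast
        next
          case False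
          then have "E' \<in> ?R" using E' by simp
          then show ?thesis using IH ER by blast
        qed
      qed
    qed
  next
    assume L: "Suc x = lo" "grows x hi xs"
    let ?T' = "?f ` {x..hi}"
    have IH: "\<forall>E\<in>?R. (\<forall>c\<in>?T'. \<forall>d\<in>?T'. \<not>crosses E {c,d} \<and> \<not>crosses {c,d} E) \<and> (\<forall>E'\<in>?R. \<not>crosses E E')"
    proof -
      have a: "grows x hi xs" "x \<le> hi" "x = x \<or> x = hi" "hi + length xs < x + n"
        using L Cons.prems by auto
      show ?thesis using Cons.IH[OF a] by simp
    qed
    have sub: "?f ` {lo..hi} \<subseteq> ?T'" using L(1) by auto
    have sp: "sep (?f x) (?f cur) ?T'"
      by (rule win_adj) (use assms(1) L(1) Cons.prems in auto)
    have neq: "?f x \<noteq> ?f cur"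
    proof
      assume "?f x = ?f cur"
      moreover have "x \<le> x" "x \<le> cur" "x < x + n" "cur < x + n" using L(1) Cons.prems by auto
      ultimately have "x = cur" using mod_inj_win[OF assms(1)] by blast
      then show False using L(1) Cons.prems by auto
    qed
    have inT: "?f cur \<in> ?T'" "?f x \<in> ?T'" using L(1) Cons.prems by auto
    have e2: "{?f cur, ?f x} = {?f x, ?f cur}" by (simp add: insert_commute)
    show ?thesis unfolding edges e2
    proof (intro ballI conjI)
      fix E c d assume E: "E \<in> insert {?f x, ?f cur} ?R" and cd: "c \<in> ?f ` {lo..hi}" "d \<in> ?f ` {lo..hi}"
      then have cd': "c \<in> ?T'" "d \<in> ?T'" using sub by auto
      show "\<not> crosses E {c,d}" "\<not> crosses {c,d} E"
        using E nc[OF neq sp cd'] IH cd' by auto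
    next
      fix E E' assume E: "E \<in> insert {?f x, ?f cur} ?R" and E': "E' \<in> insert {?f x, ?f cur} ?R"
      show "\<not> crosses E E'"
      proof (cases "E = {?f x, ?f cur}")
        case True
        show ?thesis
        proof (cases "E' = {?f x, ?f cur}")
          case True
          then show ?thesis using nc[OF neq sp inT(2) inT(1)] `E = {?f x, ?f cur}` by simp
        next
          case False
          then have "E' \<in> ?R" using E' by simp
          then have "\<forall>c\<in>?T'. \<forall>d\<in>?T'. \<not>crosses E' {c,d} \<and> \<not>crosses {c,d} E'" using IH by blast
          then show ?thesis using inT True by blast
        qed
      next
        case False
        then have ER: "E \<in> ?R" using E by simp
        show ?thesis
        proof (cases "E' = {?f x, ?f cur}")
          case True
          have "\<forall>c\<in>?T'. \<forall>d\<in>?T'. \<not>crosses E {c,d} \<and> \<not>crosses {c,d} E" using IH ER by blast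
          then show ?thesis using inT True by blast
        next
          case False
          then have "E' \<in> ?R" using E' by simp
          then show ?thesis using IH ER by blast
        qed
      qed
    qed
  qed
qed

lemma grows_SHP:
  fixes n :: nat
  assumes "n > 0" "grows s s xs" "length xs = n - 1"
  shows "is_SHP n (map (\<lambda>v. v mod n) (s # xs))"
proof -
  let ?f = "\<lambda>v::nat. v mod n"
  have "\<exists>lo' hi'. lo' \<le> s \<and> s \<le> hi' \<and> hi' + s = s + lo' + length xs \<and>
     set xs \<union> {s..s} = {lo'..hi'} \<and> set xs \<inter> {s..s} = {} \<and> distinct xs"
    using grows_struct[OF assms(2)] by blast
  then obtain lo' hi' where h: "lo' \<le> s" "s \<le> hi'" "hi' + s = s + lo' + length xs"
     "set xs \<union> {s..s} = {lo'..hi'}" "set xs \<inter> {s..s} = {}" "distinct xs"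
    by blast
  have hh: "hi' = lo' + (n - 1)" using h(3) assms(3) by simp
  have st: "set (s # xs) = {lo'..hi'}" using h(4) by auto
  have ds: "distinct (s # xs)" using h(5,6) by auto
  have inj: "inj_on ?f {lo'..hi'}"
  proof (rule inj_onI)
    fix u v assume uv: "u \<in> {lo'..hi'}" "v \<in> {lo'..hi'}" "u mod n = v mod n"
    have "lo' \<le> u" "lo' \<le> v" "u < lo' + n" "v < lo' + n" using uv(1,2) hh assms(1) by auto
    then show "u = v" using mod_inj_win[OF assms(1)] uv(3) by blast
  qed
  have d: "distinct (map ?f (s # xs))" unfolding distinct_map using ds inj st by simp
  have c1: "?f ` {lo'..hi'} \<subseteq> {..<n}" using assms(1) by auto
  have "card (?f ` {lo'..hi'}) = card {lo'..hi'}" using card_image[OF inj] .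
  also have "\<dots> = n" using hh assms(1) by simp
  finally have c2: "card (?f ` {lo'..hi'}) = card {..<n}" by simp
  have "?f ` {lo'..hi'} = {..<n}" using card_subset_eq[OF _ c1 c2] by simp
  then have sset: "set (map ?f (s # xs)) = {..<n}" using st by (simp only: set_map)
  have a: "s \<le> s" "s = s \<or> s = s" "s + length xs < s + n" using assms by auto
  have "\<forall>E\<in>path_edges (map ?f (s # xs)). \<forall>E'\<in>path_edges (map ?f (s # xs)). \<not>crosses E E'"
    using grows_nc[OF assms(1,2) a] by blast
  then show ?thesis unfolding is_SHP_def using d sset by blast
qed


fun down :: "nat \<Rightarrow> nat \<Rightarrow> nat list" where
  "down v 0 = []" | "down v (Suc r) = v # down (v - 1) r"
fun up :: "nat \<Rightarrow> nat \<Rightarrow> nat list" where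
  "up v 0 = []" | "up v (Suc r) = v # up (Suc v) r"
fun zz :: "nat \<Rightarrow> nat \<Rightarrow> nat \<Rightarrow> nat list" where
  "zz b a 0 = []" | "zz b a (Suc k) = b # a # zz (Suc b) (a - 1) k"
fun zz2 :: "nat \<Rightarrow> nat \<Rightarrow> nat \<Rightarrow> nat list" where
  "zz2 b a 0 = []" | "zz2 b a (Suc k) = b # a # zz2 (b - 1) (Suc a) k"

lemma len_down[simp]: "length (down v r) = r" by (induction r arbitrary: v) auto
lemma len_up[simp]: "length (up v r) = r" by (induction r arbitrary: v) auto
lemma len_zz[simp]: "length (zz b a k) = 2 * k" by (induction k arbitrary: a b) auto
lemma len_zz2[simp]: "length (zz2 b a k) = 2 * k" by (induction k arbitrary: a b) auto

lemma grows_down: "r \<le> lo \<Longrightarrow> grows (lo - r) hi ys \<Longrightarrow> grows lo hi (down (lo - 1) r @ ys)"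
proof (induction r arbitrary: lo)
  case 0 then show ?case by simp
next
  case (Suc r)
  have "grows (lo - 1) hi (down (lo - 1 - 1) r @ ys)"
    using Suc.IH[of "lo - 1"] Suc.prems by (simp add: diff_diff_add)
  then show ?case using Suc.prems by simp
qed

lemma grows_up: "grows lo (hi + r) ys \<Longrightarrow> grows lo hi (up (Suc hi) r @ ys)"
proof (induction r arbitrary: hi)
  case 0 then show ?case by simp
next
  case (Suc r)
  have "grows lo (Suc hi) (up (Suc (Suc hi)) r @ ys)"
    using Suc.IH[of "Suc hi"] Suc.prems by simp
  then show ?case by simp
qed

lemma grows_zz: "k \<le> lo \<Longrightarrow> grows (lo - k) (hi + k) ys \<Longrightarrow> grows lo hi (zz (Suc hi) (lo - 1) k @ ys)"
proof (induction k arbitrary: lo hi)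
  case 0 then show ?case by simp
next
  case (Suc k)
  have "grows (lo - 1) (Suc hi) (zz (Suc (Suc hi)) (lo - 1 - 1) k @ ys)"
    using Suc.IH[of "lo - 1" "Suc hi"] Suc.prems by (simp add: diff_diff_add)
  then show ?case using Suc.prems by simp
qed

lemma grows_zz2: "k \<le> lo \<Longrightarrow> grows (lo - k) (hi + k) ys \<Longrightarrow> grows lo hi (zz2 (lo - 1) (Suc hi) k @ ys)"
proof (induction k arbitrary: lo hi)
  case 0 then show ?case by simp
next
  case (Suc k)
  have "grows (lo - 1) (Suc hi) (zz2 (lo - 1 - 1) (Suc (Suc hi)) k @ ys)"
    using Suc.IH[of "lo - 1" "Suc hi"] Suc.prems by (simp add: diff_diff_add)
  then show ?case using Suc.prems by simp
qed

fun chain :: "(nat \<Rightarrow> nat \<Rightarrow> bool) \<Rightarrow> nat \<Rightarrow> nat list \<Rightarrow> bool" where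
  "chain P c [] = True" | "chain P c (x # xs) = (P c x \<and> chain P x xs)"

lemma chain_edges: "chain P c xs \<Longrightarrow> E \<in> path_edges (map f (c # xs)) \<Longrightarrow> \<exists>a b. P a b \<and> E = {f a, f b}"
proof (induction xs arbitrary: c)
  case Nil then show ?case by simp
next
  case (Cons x xs)
  then show ?case by auto
qed

lemma chain_down:
  assumes "r \<le> Suc v" "0 < r \<Longrightarrow> P c v" "\<And>t. Suc t < r \<Longrightarrow> P (v - t) (v - Suc t)"
    "chain P (if r = 0 then c else Suc v - r) ys"
  shows "chain P c (down v r @ ys)"
  using assms
proof (induction r arbitrary: v c)
  case 0 then show ?case by simp
next
  case (Suc r)
  have "chain P v (down (v - 1) r @ ys)"
  proof (rule Suc.IH)
    show "r \<le> Suc (v - 1)" using Suc.prems by simp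
    show "P v (v - 1)" if "0 < r" using Suc.prems(3)[of 0] that by simp
    show "P (v - 1 - t) (v - 1 - Suc t)" if "Suc t < r" for t
      using Suc.prems(3)[of "Suc t"] that by (simp add: diff_diff_add)
    show "chain P (if r = 0 then v else Suc (v - 1) - r) ys"
      using Suc.prems(1,4) by (cases r) auto
  qed
  then show ?case using Suc.prems(2) by simp
qed

lemma chain_up:
  assumes "0 < r \<Longrightarrow> P c v" "\<And>t. Suc t < r \<Longrightarrow> P (v + t) (v + Suc t)"
    "chain P (if r = 0 then c else v + r - 1) ys"
  shows "chain P c (up v r @ ys)"
  using assms
proof (induction r arbitrary: v c)
  case 0 then show ?case by simp
next
  case (Suc r)
  have "chain P v (up (Suc v) r @ ys)"
  proof (rule Suc.IH)
    show "P v (Suc v)" if "0 < r" using Suc.prems(2)[of 0] that by simp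
    show "P (Suc v + t) (Suc v + Suc t)" if "Suc t < r" for t
      using Suc.prems(2)[of "Suc t"] that by simp
    show "chain P (if r = 0 then v else Suc v + r - 1) ys"
      using Suc.prems(3) by (cases r) auto
  qed
  then show ?case using Suc.prems(1) by simp
qed

lemma chain_zz:
  assumes "k \<le> Suc a" "0 < k \<Longrightarrow> P c b" "\<And>j. j < k \<Longrightarrow> P (b + j) (a - j)"
    "\<And>j. Suc j < k \<Longrightarrow> P (a - j) (b + Suc j)"
    "chain P (if k = 0 then c else Suc a - k) ys"
  shows "chain P c (zz b a k @ ys)"
  using assms
proof (induction k arbitrary: a b c)
  case 0 then show ?case by simp
next
  case (Suc k)
  have "chain P a (zz (Suc b) (a - 1) k @ ys)"
  proof (rule Suc.IH)
    show "k \<le> Suc (a - 1)" using Suc.prems by simp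
    show "P a (Suc b)" if "0 < k" using Suc.prems(4)[of 0] that by simp
    show "P (Suc b + j) (a - 1 - j)" if "j < k" for j
      using Suc.prems(3)[of "Suc j"] that by simp
    show "P (a - 1 - j) (Suc b + Suc j)" if "Suc j < k" for j
      using Suc.prems(4)[of "Suc j"] that by (simp add: diff_diff_add)
    show "chain P (if k = 0 then a else Suc (a - 1) - k) ys"
      using Suc.prems(1,5) by (cases k) auto
  qed
  then show ?case using Suc.prems(2) Suc.prems(3)[of 0] by simp
qed

lemma chain_zz2:
  assumes "k \<le> Suc b" "0 < k \<Longrightarrow> P c b" "\<And>j. j < k \<Longrightarrow> P (b - j) (a + j)"
    "\<And>j. Suc j < k \<Longrightarrow> P (a + j) (b - Suc j)"
    "chain P (if k = 0 then c else a + k - 1) ys"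
  shows "chain P c (zz2 b a k @ ys)"
  using assms
proof (induction k arbitrary: a b c)
  case 0 then show ?case by simp
next
  case (Suc k)
  have "chain P a (zz2 (b - 1) (Suc a) k @ ys)"
  proof (rule Suc.IH)
    show "k \<le> Suc (b - 1)" using Suc.prems by simp
    show "P a (b - 1)" if "0 < k" using Suc.prems(4)[of 0] that by simp
    show "P (b - 1 - j) (Suc a + j)" if "j < k" for j
      using Suc.prems(3)[of "Suc j"] that by (simp add: diff_diff_add)
    show "P (Suc a + j) (b - 1 - Suc j)" if "Suc j < k" for j
      using Suc.prems(4)[of "Suc j"] that by (simp add: diff_diff_add)
    show "chain P (if k = 0 then a else Suc a + k - 1) ys"
      using Suc.prems(5) by (cases k) auto
  qed
  then show ?case using Suc.prems(2) Suc.prems(3)[of 0] by simp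
qed


lemma sum_two: "a \<noteq> b \<Longrightarrow> (\<Sum>x\<in>{a, b}. x) = (a::nat) + b" by simp

theorem proposition4:
  fixes m \<alpha> \<delta> :: nat and B :: "nat set set" and e :: "nat set"
  assumes m2: "m \<ge> 2"
    and blocker: "is_SHP_blocker (2*m-1) B"
    and cardB: "card B = m"
    and dirs: "edge_dir (2*m-1) ` B = {edge_dir (2*m-1) {i, i+1} | i. i < m}"
    and alpha_lt: "\<alpha> < m" and alpha_in: "{\<alpha>, \<alpha>+1} \<in> B"
    and alpha_first: "\<forall>i<\<alpha>. {i, i+1} \<notin> B"
    and delta_lt: "\<delta> < m" and delta_in: "{m-\<delta>-1, m-\<delta>} \<in> B"
    and delta_last: "\<forall>i. m-\<delta> \<le> i \<and> i < m \<longrightarrow> {i, i+1} \<notin> B"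
    and e_in: "e \<in> B"
    and e_par: "\<exists>i. (i < \<alpha> \<or> (m-\<delta> \<le> i \<and> i < m)) \<and>
                    edge_dir (2*m-1) e = edge_dir (2*m-1) {i, i+1}"
  shows "\<exists>u v. e = {u, v} \<and> \<alpha> < u \<and> u < m-\<delta> \<and> (m-\<delta> < v \<or> v < \<alpha>)"
proof (rule ccontr)
  assume H: "\<not> (\<exists>u v. e = {u, v} \<and> \<alpha> < u \<and> u < m-\<delta> \<and> (m-\<delta> < v \<or> v < \<alpha>))"
  define n where "n = 2*m - 1"
  have n0: "n > 0" "n + 1 = 2 * m" using m2 unfolding n_def by auto
  have Bck: "B \<subseteq> ck_edges n" and hits: "hits_all_SHP n B"
    using blocker unfolding n_def is_SHP_blocker_def by auto
  have finB: "finite B" using cardB m2 card.infinite by force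
  have dmod: "(2*j+1) mod n = (if j = m - 1 then 0 else 2*j+1)" if "j < m" for j
  proof (cases "j = m - 1")
    case True then have "2*j+1 = n" using that m2 unfolding n_def by simp
    then show ?thesis using True by simp
  next
    case False then have "2*j+1 < n" using that m2 unfolding n_def by simp
    then show ?thesis using False by simp
  qed
  have edir2: "edge_dir n {a, b} = (a + b) mod n" if "a \<noteq> b" for a b
    unfolding edge_dir_def using that by simp
  have dir1: "edge_dir n {j, j+1} = (2*j+1) mod n" for j
    using edir2[of j "j+1"] by (simp add: mult_2)
  have dirs': "edge_dir n ` B = (\<lambda>j. (2*j+1) mod n) ` {..<m}"
    using dirs unfolding n_def[symmetric] dir1 by auto
  have injD: "inj_on (\<lambda>j. (2*j+1) mod n) {..<m}"
  proof (rule inj_onI)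
    fix a b assume ab: "a \<in> {..<m}" "b \<in> {..<m}" "(2*a+1) mod n = (2*b+1) mod n"
    then show "a = b" using dmod[of a] dmod[of b] by (auto split: if_splits)
  qed
  have "card (edge_dir n ` B) = m" unfolding dirs' using card_image[OF injD] by simp
  then have injB: "inj_on (edge_dir n) B" using inj_on_iff_eq_card[OF finB, of "edge_dir n"] cardB by simp
  have inD: "\<exists>j<m. edge_dir n E = (2*j+1) mod n" if "E \<in> B" for E
    using that dirs' by auto
  have ckE: "\<exists>a b. E = {a, b} \<and> a \<noteq> b" if "E \<in> B" for E
    using that Bck unfolding ck_edges_def by blast
  obtain i where i: "i < \<alpha> \<or> (m-\<delta> \<le> i \<and> i < m)" "edge_dir n e = (2*i+1) mod n"
    using e_par unfolding n_def[symmetric] dir1 by blast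
  define P where "P x y \<longleftrightarrow> {x mod n, y mod n} \<notin> B" for x y
  have Psym: "P x y = P y x" for x y unfolding P_def by (simp add: insert_commute)
  have pairB: "x mod n \<noteq> y mod n \<and> edge_dir n {x mod n, y mod n} = (x + y) mod n"
    if xyB: "{x mod n, y mod n} \<in> B" for x y
  proof -
    obtain a b where "{x mod n, y mod n} = {a, b}" "a \<noteq> b" using ckE[OF xyB] by blast
    then have "x mod n \<noteq> y mod n" by (auto simp: doubleton_eq_iff)
    then show ?thesis using edir2 by (simp add: mod_add_eq)
  qed
  have ev: "P x y" if "(x + y) mod n = d" "even d" "2 \<le> d" "d \<le> 2*m-2" for x y d
  proof (rule ccontr)
    assume "\<not> P x y"
    then have inB: "{x mod n, y mod n} \<in> B" unfolding P_def by simp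
    obtain j where j: "j < m" "edge_dir n {x mod n, y mod n} = (2*j+1) mod n" using inD[OF inB] by blast
    have "d = (2*j+1) mod n" using j(2) pairB[OF inB] that(1) by simp
    then show False using dmod[OF j(1)] that(2,3) by (auto split: if_splits)
  qed
  have cls: "P x y" if "(x + y) mod n = (2*i+1) mod n" "\<alpha> < x mod n" "x mod n < m - \<delta>" for x y
  proof (rule ccontr)
    assume "\<not> P x y"
    then have inB: "{x mod n, y mod n} \<in> B" unfolding P_def by simp
    have "edge_dir n {x mod n, y mod n} = edge_dir n e" using pairB[OF inB] that(1) i(2) by simp
    then have eq: "{x mod n, y mod n} = e" using injB inB e_in by (meson inj_onD)
    define u where "u = x mod n"
    define v where "v = y mod n"
    have uv: "u < n" "v < n" "(u + v) mod n = (2*i+1) mod n" "\<alpha> < u" "u < m - \<delta>"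
      unfolding u_def v_def using n0 that by (auto simp: mod_add_eq)
    have "m - \<delta> < v \<or> v < \<alpha>"
    proof (rule ccontr)
      assume "\<not> (m - \<delta> < v \<or> v < \<alpha>)"
      then have vv: "\<alpha> \<le> v" "v \<le> m - \<delta>" by auto
      have im: "i < m" using i(1) alpha_lt by auto
      show False
      proof (cases "u + v = n")
        case True
        then have "(2*i+1) mod n = 0" using uv(3) by simp
        then have "i = m - 1" using dmod[OF im] by (auto split: if_splits)
        then show ?thesis using True vv uv i(1) unfolding n_def by auto
      next
        case False
        then have "u + v < n" using vv uv unfolding n_def by auto
        then have "u + v = (2*i+1) mod n" using uv(3) by simp
        then show ?thesis using dmod[OF im] vv uv i(1) unfolding n_def by (auto split: if_splits)
      qed
    qed
    then show False using H eq uv(4,5) unfolding u_def v_def by blast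
  qed
  have bnd: "P v (Suc v) \<and> P (Suc v) v" if "m - \<delta> \<le> v" "v < \<alpha> + n" for v
  proof -
    have "P v (Suc v)"
    proof (cases "v < m")
      case True
      then have "v mod n = v" "Suc v mod n = Suc v" using m2 unfolding n_def by auto
      then show ?thesis unfolding P_def using delta_last that True by simp
    next
      case False
      show ?thesis
      proof (cases "v < n")
        case True
        have "v + Suc v = (2*v+1-n) + n" "2*v+1-n < n" using True False unfolding n_def by auto
        then have "(v + Suc v) mod n = 2*v+1-n" by (metis mod_add_self2 mod_less)
        moreover have "2*v+1-n = 2*(v+1-m)" using False m2 unfolding n_def by arith
        then have "even (2*v+1-n)" by simp
        ultimately show ?thesis using True False by (intro ev[of v "Suc v" "2*v+1-n"]) (auto simp: n_def)
      next
        case F2: False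
        have "v mod n = v - n" "Suc v mod n = Suc v - n" using F2 that alpha_lt
          by (auto simp: mod_if n_def)
        moreover have "Suc v - n = Suc (v - n)" "v - n < \<alpha>" using F2 that by auto
        ultimately show ?thesis unfolding P_def using alpha_first by simp
      qed
    qed
    then show ?thesis using Psym by blast
  qed
  have final: False if g: "grows s s xs" "length xs = n - 1" "chain P s xs" for s xs
  proof -
    have shp: "is_SHP n (map (\<lambda>v. v mod n) (s # xs))" using grows_SHP[OF n0(1) g(1,2)] .
    have "B \<inter> path_edges (map (\<lambda>v. v mod n) (s # xs)) \<noteq> {}"
      using hits shp unfolding hits_all_SHP_def by blast
    then obtain E where E: "E \<in> B" "E \<in> path_edges (map (\<lambda>v. v mod n) (s # xs))" by blast
    obtain a b where "P a b" "E = {a mod n, b mod n}" using chain_edges[OF g(3) E(2)] by blast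
    then show False using E(1) unfolding P_def by simp
  qed
  have aD: "\<alpha> + 1 \<le> m - \<delta>"
  proof (rule ccontr)
    assume "\<not> \<alpha> + 1 \<le> m - \<delta>"
    then have "m - \<delta> - 1 < \<alpha>" "m - \<delta> - 1 + 1 = m - \<delta>" using delta_lt by auto
    then show False using alpha_first delta_in by metis
  qed
  have modn: "x mod n = d" if "x = d + n" "d < n" for x d using that by simp
  have evP: "P x y" if "x + y = d + n" "d < n" "even d" "2 \<le> d" "d \<le> 2*m-2" for x y d
    using ev[of x y d] modn[of "x + y" d] that by simp
  have modn2: "x mod n = (2*i+1) mod n" if "x = 2*i+1 + n" for x
    unfolding that by (rule mod_add_self2)
  show False
  proof (cases "i < \<alpha>")
    case True
    define D where "D = m - \<delta>"
    define k where "k = D - \<alpha> - 1"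
    define s where "s = 2*i+1+n-D"
    define r1 where "r1 = s - D"
    define r3 where "r3 = \<alpha> + n - (s + k)"
    have ar: "\<alpha> + 1 \<le> D" "D \<le> m" "D + k = \<alpha> + 1 + 2*k" "s + k < \<alpha> + n" "D \<le> s" "s - r1 = D"
      "k \<le> D" "s + k + r3 = \<alpha> + n" "r1 + (2*k + r3) = n - 1" "2*i+2 < n" "2*i+2 \<le> 2*m-2"
      "s + D = 2*i+1+n" "D - k = \<alpha> + 1"
    proof -
      have e1: "D + \<delta> = m" unfolding D_def using delta_lt by simp
      have e0: "n + 1 = 2 * m" by (rule n0(2))
      have aD': "\<alpha> + 1 \<le> D" using aD unfolding D_def .
      have e2: "k + \<alpha> + 1 = D" unfolding k_def using aD' by simp
      have e3: "s + D = 2*i+1+n" unfolding s_def using e1 e0 by simp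
      have e4: "r1 + D = s" unfolding r1_def using e3 e1 e0 True alpha_lt by simp
      have e5: "r3 + s + k = \<alpha> + n" unfolding r3_def using e3 e2 e0 True by simp
      show "\<alpha> + 1 \<le> D" "D \<le> m" "D + k = \<alpha> + 1 + 2*k" "s + k < \<alpha> + n" "D \<le> s" "s - r1 = D"
      "k \<le> D" "s + k + r3 = \<alpha> + n" "r1 + (2*k + r3) = n - 1" "2*i+2 < n" "2*i+2 \<le> 2*m-2"
      "s + D = 2*i+1+n" "D - k = \<alpha> + 1"
        using e0 e1 e2 e3 e4 e5 True alpha_lt by linarith+
    qed
    define xs where "xs = down (s - 1) r1 @ zz (Suc s) (D - 1) k @ up (Suc (s + k)) r3"
    have g3: "grows (D - k) (s + k) (up (Suc (s + k)) r3)"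
      using grows_up[of "D - k" "s + k" r3 "[]"] ar by simp
    have g2: "grows D s (zz (Suc s) (D - 1) k @ up (Suc (s + k)) r3)"
      using grows_zz[of k D s "up (Suc (s + k)) r3"] g3 ar by simp
    have g1: "grows s s xs" unfolding xs_def
      using grows_down[of r1 s s "zz (Suc s) (D - 1) k @ up (Suc (s + k)) r3"] g2 ar by simp
    have len: "length xs = n - 1" unfolding xs_def using ar(9) by simp
    have c3: "chain P (\<alpha> + 1) (up (Suc (s + k)) r3 @ [])"
    proof (rule chain_up)
      show "P (\<alpha> + 1) (Suc (s + k))"
        by (rule evP[of _ _ "2*i+2"]) (use ar(3,10,11,12) in auto)
      show "P (Suc (s + k) + t) (Suc (s + k) + Suc t)" if "Suc t < r3" for t
        using bnd[of "Suc (s + k) + t"] that ar D_def by simp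
    qed simp
    have c2: "chain P D (zz (Suc s) (D - 1) k @ up (Suc (s + k)) r3)"
    proof (rule chain_zz)
      show "k \<le> Suc (D - 1)" using ar(7) by simp
      show "P D (Suc s)"
        by (rule evP[of _ _ "2*i+2"]) (use ar(10,11,12) in auto)
      show "P (Suc s + j) (D - 1 - j)" if "j < k" for j
      proof -
        have "P (D - 1 - j) (Suc s + j)"
        proof (rule cls)
          show "(D - 1 - j + (Suc s + j)) mod n = (2 * i + 1) mod n"
            by (rule modn2) (use ar(7,12) that in arith)
          have "(D - 1 - j) mod n = D - 1 - j" using ar(2) that m2 unfolding n_def by simp
          then show "\<alpha> < (D - 1 - j) mod n" "(D - 1 - j) mod n < m - \<delta>"
            using ar(13) that unfolding D_def by auto
        qed
        then show ?thesis using Psym by blast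
      qed
      show "P (D - 1 - j) (Suc s + Suc j)" if "Suc j < k" for j
        by (rule evP[of _ _ "2*i+2"]) (use ar(7,10,11,12) that in auto)
      have "(if k = 0 then D else Suc (D - 1) - k) = \<alpha> + 1" using ar(1,13) by auto
      then show "chain P (if k = 0 then D else Suc (D - 1) - k) (up (Suc (s + k)) r3)"
        using c3 by simp
    qed
    have c1: "chain P s xs" unfolding xs_def
    proof (rule chain_down)
      show "r1 \<le> Suc (s - 1)" using ar(1,5) unfolding r1_def by simp
      show "P s (s - 1)" if "0 < r1"
        using bnd[of "s - 1"] that ar unfolding r1_def D_def by simp
      show "P (s - 1 - t) (s - 1 - Suc t)" if "Suc t < r1" for t
      proof -
        have "Suc (s - 1 - Suc t) = s - 1 - t" using that unfolding r1_def by simp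
        then show ?thesis using bnd[of "s - 1 - Suc t"] that ar unfolding r1_def D_def by simp
      qed
      have "(if r1 = 0 then s else Suc (s - 1) - r1) = D" using ar(1,5) unfolding r1_def by auto
      then show "chain P (if r1 = 0 then s else Suc (s - 1) - r1) (zz (Suc s) (D - 1) k @ up (Suc (s + k)) r3)"
        using c2 by simp
    qed
    show False using final[OF g1 len c1] .
  next
    case False
    then have iD: "m - \<delta> \<le> i" "i < m" using i(1) by auto
    define D where "D = m - \<delta>"
    define k where "k = D - \<alpha> - 1"
    define s where "s = 2*i - \<alpha> + 1"
    define r1 where "r1 = \<alpha> + n - s"
    define r3 where "r3 = s - 1 - k - D + 1"
    have ar: "\<alpha> + 1 \<le> D" "D \<le> i" "1 \<le> D" "D \<le> s" "s \<le> \<alpha> + n" "s + r1 = \<alpha> + n" "k \<le> s"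
      "r3 \<le> s - k" "s - k - r3 = D" "r1 + (2*k + r3) = n - 1" "2 \<le> 2*i" "2*i \<le> 2*m-2" "2*i < n"
      "\<alpha> + n + k = D - 1 + n" "s - 1 - k = 2*i - \<alpha> - k" "k + D \<le> s - 1" "2 \<le> r3"
      "s + \<alpha> = 2*i + 1" "r3 + k + D = s" "k + \<alpha> + 1 = D"
    proof -
      have e1: "D + \<delta> = m" unfolding D_def using delta_lt by simp
      have e0: "n + 1 = 2 * m" by (rule n0(2))
      have aD': "\<alpha> + 1 \<le> D" using aD unfolding D_def .
      have e2: "k + \<alpha> + 1 = D" unfolding k_def using aD' by simp
      have iD': "D \<le> i" using iD unfolding D_def by simp
      have e3: "s + \<alpha> = 2*i + 1" unfolding s_def using iD' aD' by simp
      have e4: "r1 + s = \<alpha> + n" unfolding r1_def using e3 e0 iD by simp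
      have e5: "r3 + k + D = s" unfolding r3_def using e3 e2 iD' by simp
      show "\<alpha> + 1 \<le> D" "D \<le> i" "1 \<le> D" "D \<le> s" "s \<le> \<alpha> + n" "s + r1 = \<alpha> + n" "k \<le> s"
      "r3 \<le> s - k" "s - k - r3 = D" "r1 + (2*k + r3) = n - 1" "2 \<le> 2*i" "2*i \<le> 2*m-2" "2*i < n"
      "\<alpha> + n + k = D - 1 + n" "s - 1 - k = 2*i - \<alpha> - k" "k + D \<le> s - 1" "2 \<le> r3"
      "s + \<alpha> = 2*i + 1" "r3 + k + D = s" "k + \<alpha> + 1 = D"
        using e0 e1 e2 e3 e4 e5 iD iD' aD' alpha_lt by linarith+
    qed
    define xs where "xs = up (Suc s) r1 @ zz2 (s - 1) (Suc (\<alpha> + n)) k @ down (s - 1 - k) r3"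
    have g3: "grows (s - k) (\<alpha> + n + k) (down (s - 1 - k) r3)"
      using grows_down[of r3 "s - k" "\<alpha> + n + k" "[]"] ar by (simp add: diff_diff_add add.commute)
    have g2: "grows s (\<alpha> + n) (zz2 (s - 1) (Suc (\<alpha> + n)) k @ down (s - 1 - k) r3)"
      using grows_zz2[of k s "\<alpha> + n" "down (s - 1 - k) r3"] g3 ar by simp
    have g1: "grows s s xs" unfolding xs_def
      using grows_up[of s s r1 "zz2 (s - 1) (Suc (\<alpha> + n)) k @ down (s - 1 - k) r3"] g2 ar by simp
    have len: "length xs = n - 1" unfolding xs_def using ar(10) by simp
    have c3: "chain P (\<alpha> + n + k) (down (s - 1 - k) r3 @ [])"
    proof (rule chain_down)
      show "r3 \<le> Suc (s - 1 - k)" using ar(8) by simp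
      show "P (\<alpha> + n + k) (s - 1 - k)"
      proof (rule ev[of _ _ "2*i"])
        have "\<alpha> + n + k + (s - 1 - k) = 2*i + n" using ar(3,16,18) by arith
        then show "(\<alpha> + n + k + (s - 1 - k)) mod n = 2 * i" using ar(13) modn by blast
      qed (use ar(11,12) in auto)
      show "P (s - 1 - k - t) (s - 1 - k - Suc t)" if "Suc t < r3" for t
      proof -
        have "Suc (s - 1 - k - Suc t) = s - 1 - k - t" "D \<le> s - 1 - k - Suc t" "s - 1 - k - Suc t < \<alpha> + n"
          using that ar(3,5,16,19) by arith+
        then show ?thesis using bnd[of "s - 1 - k - Suc t"] unfolding D_def by simp
      qed
    qed simp
    have c2: "chain P (\<alpha> + n) (zz2 (s - 1) (Suc (\<alpha> + n)) k @ down (s - 1 - k) r3)"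
    proof (rule chain_zz2)
      show "k \<le> Suc (s - 1)" using ar(7) by simp
      show "P (\<alpha> + n) (s - 1)"
      proof (rule ev[of _ _ "2*i"])
        have "\<alpha> + n + (s - 1) = 2*i + n" using ar(3,4,18) by arith
        then show "(\<alpha> + n + (s - 1)) mod n = 2 * i" using ar(13) modn by blast
      qed (use ar(11,12) in auto)
      show "P (s - 1 - j) (Suc (\<alpha> + n) + j)" if "j < k" for j
      proof -
        have "P (Suc (\<alpha> + n) + j) (s - 1 - j)"
        proof (rule cls)
          show "(Suc (\<alpha> + n) + j + (s - 1 - j)) mod n = (2 * i + 1) mod n"
            by (rule modn2) (use ar(16,18) that in arith)
          have "\<alpha> + 1 + j < n" using ar(2,13,20) that by arith
          then have "(Suc (\<alpha> + n) + j) mod n = \<alpha> + 1 + j" using modn[of "Suc (\<alpha> + n) + j" "\<alpha> + 1 + j"] by simp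
          then show "\<alpha> < (Suc (\<alpha> + n) + j) mod n" "(Suc (\<alpha> + n) + j) mod n < m - \<delta>"
            using ar(20) that unfolding D_def[symmetric] by auto
        qed
        then show ?thesis using Psym by blast
      qed
      show "P (Suc (\<alpha> + n) + j) (s - 1 - Suc j)" if "Suc j < k" for j
      proof (rule ev[of _ _ "2*i"])
        have "Suc (\<alpha> + n) + j + (s - 1 - Suc j) = 2*i + n" using ar(16,18) that by arith
        then show "(Suc (\<alpha> + n) + j + (s - 1 - Suc j)) mod n = 2 * i" using ar(13) modn by blast
      qed (use ar(11,12) in auto)
      have "(if k = 0 then \<alpha> + n else Suc (\<alpha> + n) + k - 1) = \<alpha> + n + k" by auto
      then show "chain P (if k = 0 then \<alpha> + n else Suc (\<alpha> + n) + k - 1) (down (s - 1 - k) r3)"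
        using c3 by simp
    qed
    have c1: "chain P s xs" unfolding xs_def
    proof (rule chain_up)
      show "P s (Suc s)" if "0 < r1"
        using bnd[of s] that ar unfolding r1_def D_def by simp
      show "P (Suc s + t) (Suc s + Suc t)" if "Suc t < r1" for t
        using bnd[of "Suc s + t"] that ar unfolding r1_def D_def by simp
      have "(if r1 = 0 then s else Suc s + r1 - 1) = \<alpha> + n" using ar(6) by auto
      then show "chain P (if r1 = 0 then s else Suc s + r1 - 1) (zz2 (s - 1) (Suc (\<alpha> + n)) k @ down (s - 1 - k) r3)"
        using c2 by simp
    qed
    show False using final[OF g1 len c1] .
  qed
qed

end
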